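(* Suppose $\mathcal Q$ is vertically unbounded, $m=1$, and $v(p)>H$ (i.e. $v(p)>h$ for every $h\in H$). Then $p$ divides the binomial coefficient $\binom{\ell}{k}$ for every $k\in J$ and every $\ell\in B$ with $\ell>k$.
   Context: Let $(K,v)$ be a valued field and $p$ the characteristic exponent of its residue field ($p=1$ if the residue characteristic is $0$, otherwise $p$ is the residue characteristic); $v(p)$ denotes the value of $p\cdot1\in K$ (so $v(p)=\infty$ if $\mathrm{char}K=p>0$). Let $\Gamma$ be the divisible hull of $vK$, embedded in a divisible ordered abelian group $\Lambda$. Let $\nu\colon K[x]\to\Lambda\cup\{\infty\}$ be a valuation extending $v$ which is well-specified, i.e. it is not the case that simultaneously $\nu^{-1}(\infty)=0$, the value group of $\nu$ modulo $\Gamma$ is torsion, and the residue field of $\nu$ is algebraic over that of $v$. For $s\ge0$ let $\partial_s$ be the $s$-th Hasse–Schmidt derivative, defined by $f(x+y)=\sum_{s\ge0}(\partial_sf)y^s$. For nonconstant $f$ with $\nu(f)<\infty$ the level is $\epsilon_\nu(f)=\max\{(\nu(f)-\nu(\partial_sf))/s: s\ge1\}$; $\epsilon_\nu(a)=-\infty$ for $a\in K$. A monic $Q\in K[x]$ is a key polynomial for $\nu$ if $\epsilon_\nu(f)<\epsilon_\nu(Q)$ whenever $\deg f<\deg Q$. For monic $Q$, each $f$ has a unique $Q$-expansion $f=\sum_{i\ge0}f_{Q,i}Q^i$ with $\deg f_{Q,i}<\deg Q$; set $\nu_Q(f)=\min_i\nu(f_{Q,i}Q^i)$. Fix $m\ge1$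 such that the set $\Psi_m$ of key polynomials of degree $m$ for $\nu$ is nonempty and has no element of maximal $\nu$-value. Let $\mathcal Q\subseteq\Psi_m$ be well-ordered by $Q<R\iff\nu(Q)<\nu(R)$ and cofinal in $\Psi_m$ for $\nu$-values; write $\gamma_Q=\nu(Q)$. As in the paper, all values $\nu_Q(f)$ ($f\ne0$) lie in $\Gamma$. "For all $Q$ large enough" means for all $Q$ in a final segment of $\mathcal Q$. $f$ is $\mathcal Q$-stable if $\nu_Q(f)=\nu(f)$ for all $Q$ large enough, $\mathcal Q$-unstable otherwise. Assume unstable polynomials exist; limit key polynomials are the monic $\mathcal Q$-unstable polynomials of minimal degree, forming $\mathrm{KP}_\infty(\mathcal Q)$. Fix $F\in\mathrm{KP}_\infty(\mathcal Q)$, $D=\lfloor\deg F/m\rfloor$, $F=\sum_{\ell=0}^DF_{Q,\ell}Q^\ell$, $\beta_{Q,\ell}=\nu(F_{Q,\ell})\in\Gamma\cup\{\infty\}$. Let $\delta^L$ be the smallest initial segment of $\Gamma$ containing $\{\nu_Q(F):Q\in\mathcal Q\}$; write $x>\delta^L$ if $x\in(\Gamma\setminus\delta^L)\cup\{\infty\}$. Let $J$ be the set of $\ell\in\{0,\dots,D\}$ with $\beta_{Q,\ell}+\ell\gamma_Q>\delta^L$ for all $Q$ large enough, and $B=\{0,\dots,D\}\setminus J$. A cut $\eta=(\eta^L,\eta^R)$ of $\Gamma$ is vertically bounded if for every $x\in\eta^L$ and rational $q>1$ there is $y\in\eta^L$ with $q(y-x)>z-x$ for all $z\in\eta^L$;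 its invariance group is $\{h\in\Gamma:h+\eta^L=\eta^L\}$. Let $\gamma_{\mathcal Q}$ be the cut whose lower set is the smallest initial segment of $\Gamma$ containing $\{\gamma_Q\}$; $\mathcal Q$ is vertically unbounded if $\gamma_{\mathcal Q}$ is not vertically bounded; $H$ is the invariance group of $\gamma_{\mathcal Q}$. *)

theory Defs
  imports "HOL-Computational_Algebra.Polynomial" "HOL-Computational_Algebra.Primes"
          "HOL-Library.Extended"
begin

text \<open>Lambda is the ambient type 'g (a linearly ordered abelian group, assumed divisible
in the theorem); Lambda \<union> {infinity} is rendered as 'g extended with Pinf = infinity
(Minf is only used as the level -infinity of constants).  K is the field 'k, and the
valuation v on K is the restriction of nu to constant polynomials.\<close>

definition nsmul :: "nat \<Rightarrow> 'g::ab_group_add \<Rightarrow> 'g" where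
  "nsmul n g = (\<Sum>i<n. g)"

definition divisible_grp :: "'g::ab_group_add itself \<Rightarrow> bool" where
  "divisible_grp _ \<longleftrightarrow> (\<forall>(g::'g) n. 0 < n \<longrightarrow> (\<exists>h. nsmul n h = g))"

text \<open>g / n in a divisible torsion-free group\<close>
definition gdiv :: "'g::linordered_ab_group_add \<Rightarrow> nat \<Rightarrow> 'g" where
  "gdiv g n = (THE h. nsmul n h = g)"

definition is_valuation :: "('k::field poly \<Rightarrow> 'g::linordered_ab_group_add extended) \<Rightarrow> bool" where
  "is_valuation nu \<longleftrightarrow> nu 0 = Pinf \<and> nu 1 = Fin 0 \<and> (\<forall>f. nu f \<noteq> Minf)
     \<and> (\<forall>f g. nu (f * g) = nu f + nu g) \<and> (\<forall>f g. min (nu f) (nu g) \<le> nu (f + g))"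

definition valgrp_K :: "('k::field poly \<Rightarrow> 'g::linordered_ab_group_add extended) \<Rightarrow> 'g set" where
  "valgrp_K nu = {g. \<exists>a. a \<noteq> 0 \<and> nu [:a:] = Fin g}"

definition Gamma :: "('k::field poly \<Rightarrow> 'g::linordered_ab_group_add extended) \<Rightarrow> 'g set" where
  "Gamma nu = {g. \<exists>n>0. nsmul n g \<in> valgrp_K nu}"

text \<open>value group of nu (as a valuation on K(x) when its support is 0)\<close>
definition valgrp_nu :: "('k::field poly \<Rightarrow> 'g::linordered_ab_group_add extended) \<Rightarrow> 'g set" where
  "valgrp_nu nu = {a - b | a b. (\<exists>f. nu f = Fin a) \<and> (\<exists>h. nu h = Fin b)}"

text \<open>The residue field of nu (on K(x), support 0) is algebraic over that of v:
  every residue class of a quotient f/h with nu f = nu h (the nonzero residues) is a root of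
  a nonzero polynomial over the residue field of v, i.e. there are c_0..c_n in the valuation
  ring of v, not all in its maximal ideal, with nu(sum c_i (f/h)^i) > 0.\<close>
definition res_algebraic :: "('k::field poly \<Rightarrow> 'g::linordered_ab_group_add extended) \<Rightarrow> bool" where
  "res_algebraic nu \<longleftrightarrow> (\<forall>f h a. nu f = Fin a \<and> nu h = Fin a \<longrightarrow>
      (\<exists>n c. (\<forall>i\<le>n. Fin 0 \<le> nu [:c i:]) \<and> (\<exists>i\<le>n. nu [:c i:] = Fin 0) \<and>
             Fin (nsmul n a) < nu (\<Sum>i\<le>n. smult (c i) (f ^ i * h ^ (n - i)))))"

definition well_specified :: "('k::field poly \<Rightarrow> 'g::linordered_ab_group_add extended) \<Rightarrow> bool" where
  "well_specified nu \<longleftrightarrow> \<not> ((\<forall>f. nu f = Pinf \<longrightarrow> f = 0)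
       \<and> (\<forall>g\<in>valgrp_nu nu. \<exists>n>0. nsmul n g \<in> Gamma nu)
       \<and> res_algebraic nu)"

text \<open>characteristic exponent of the residue field of v\<close>
definition char_exp :: "('k::field poly \<Rightarrow> 'g::linordered_ab_group_add extended) \<Rightarrow> nat" where
  "char_exp nu = (if \<exists>q::nat. prime q \<and> Fin 0 < nu [:of_nat q:]
                  then (THE q::nat. prime q \<and> Fin 0 < nu [:of_nat q:]) else 1)"

text \<open>Hasse-Schmidt derivative: f(x+y) = sum_s (hasse s f) y^s\<close>
definition hasse :: "nat \<Rightarrow> 'k::field poly \<Rightarrow> 'k poly" where
  "hasse s f = coeff (pcompose (map_poly (\<lambda>a. [:a:]) f) [: [:0, 1:], 1 :]) s"

text \<open>level; for nonconstant f with nu f = infinity we use the value infinity\<close>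
definition level :: "('k::field poly \<Rightarrow> 'g::linordered_ab_group_add extended) \<Rightarrow> 'k poly \<Rightarrow> 'g extended" where
  "level nu f = (if degree f = 0 then Minf else if nu f = Pinf then Pinf else
     Max ((\<lambda>s. case (nu f, nu (hasse s f)) of (Fin a, Fin b) \<Rightarrow> Fin (gdiv (a - b) s) | _ \<Rightarrow> Minf)
          ` {1..degree f}))"

definition key_poly :: "('k::field poly \<Rightarrow> 'g::linordered_ab_group_add extended) \<Rightarrow> 'k poly \<Rightarrow> bool" where
  "key_poly nu Q \<longleftrightarrow> lead_coeff Q = 1 \<and> (\<forall>f. degree f < degree Q \<longrightarrow> level nu f < level nu Q)"

definition Psi :: "('k::field poly \<Rightarrow> 'g::linordered_ab_group_add extended) \<Rightarrow> nat \<Rightarrow> 'k poly set" where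
  "Psi nu m = {Q. key_poly nu Q \<and> degree Q = m}"

definition qcoeff :: "'k::field poly \<Rightarrow> 'k poly \<Rightarrow> nat \<Rightarrow> 'k poly" where
  "qcoeff Q f i = (f div Q ^ i) mod Q"

definition nuQ :: "('k::field poly \<Rightarrow> 'g::linordered_ab_group_add extended) \<Rightarrow> 'k poly \<Rightarrow> 'k poly \<Rightarrow> 'g extended" where
  "nuQ nu Q f = Min ((\<lambda>i. nu (qcoeff Q f i * Q ^ i)) ` {0..degree f})"

definition ev_large :: "('k::field poly \<Rightarrow> 'g::linordered_ab_group_add extended) \<Rightarrow> 'k poly set \<Rightarrow> ('k poly \<Rightarrow> bool) \<Rightarrow> bool" where
  "ev_large nu Qs P \<longleftrightarrow> (\<exists>Q0\<in>Qs. \<forall>Q\<in>Qs. nu Q0 \<le> nu Q \<longrightarrow> P Q)"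

definition stable :: "('k::field poly \<Rightarrow> 'g::linordered_ab_group_add extended) \<Rightarrow> 'k poly set \<Rightarrow> 'k poly \<Rightarrow> bool" where
  "stable nu Qs f \<longleftrightarrow> ev_large nu Qs (\<lambda>Q. nuQ nu Q f = nu f)"

definition KP_inf :: "('k::field poly \<Rightarrow> 'g::linordered_ab_group_add extended) \<Rightarrow> 'k poly set \<Rightarrow> 'k poly set" where
  "KP_inf nu Qs = {F. lead_coeff F = 1 \<and> \<not> stable nu Qs F \<and>
                     (\<forall>g. \<not> stable nu Qs g \<longrightarrow> degree F \<le> degree g)}"

definition deltaL :: "('k::field poly \<Rightarrow> 'g::linordered_ab_group_add extended) \<Rightarrow> 'k poly set \<Rightarrow> 'k poly \<Rightarrow> 'g set" where
  "deltaL nu Qs F = {g \<in> Gamma nu. \<exists>Q\<in>Qs. Fin g \<le> nuQ nu Q F}"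

text \<open>x > delta^L iff x in (Gamma - delta^L) \<union> {infinity}\<close>
definition above_cut :: "'g::linordered_ab_group_add set \<Rightarrow> 'g set \<Rightarrow> 'g extended \<Rightarrow> bool" where
  "above_cut G L x \<longleftrightarrow> x = Pinf \<or> (\<exists>g. x = Fin g \<and> g \<in> G \<and> g \<notin> L)"

definition Jset :: "('k::field poly \<Rightarrow> 'g::linordered_ab_group_add extended) \<Rightarrow> 'k poly set \<Rightarrow> nat \<Rightarrow> 'k poly \<Rightarrow> nat set" where
  "Jset nu Qs m F = {l \<in> {0..degree F div m}. ev_large nu Qs
      (\<lambda>Q. above_cut (Gamma nu) (deltaL nu Qs F) (nu (qcoeff Q F l) + (\<Sum>i<l. nu Q)))}"

definition Bset :: "('k::field poly \<Rightarrow> 'g::linordered_ab_group_add extended) \<Rightarrow> 'k poly set \<Rightarrow> nat \<Rightarrow> 'k poly \<Rightarrow> nat set" where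
  "Bset nu Qs m F = {0..degree F div m} - Jset nu Qs m F"

text \<open>vertically bounded cut of G with lower set L (q = a/b rational > 1)\<close>
definition vert_bounded :: "'g::linordered_ab_group_add set \<Rightarrow> bool" where
  "vert_bounded L \<longleftrightarrow> (\<forall>x\<in>L. \<forall>a b::nat. 0 < b \<and> b < a \<longrightarrow>
      (\<exists>y\<in>L. \<forall>z\<in>L. nsmul b (z - x) < nsmul a (y - x)))"

definition invariance_grp :: "'g::linordered_ab_group_add set \<Rightarrow> 'g set \<Rightarrow> 'g set" where
  "invariance_grp G L = {h \<in> G. (\<lambda>g. h + g) ` L = L}"

definition gammaL :: "('k::field poly \<Rightarrow> 'g::linordered_ab_group_add extended) \<Rightarrow> 'k poly set \<Rightarrow> 'g set" where
  "gammaL nu Qs = {g \<in> Gamma nu. \<exists>Q\<in>Qs. Fin g \<le> nu Q}"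

end

theory Submission
  imports Defs
begin


locale valu =
  fixes nu :: "'k::field poly \<Rightarrow> 'g::linordered_ab_group_add extended"
  assumes val: "is_valuation nu"
begin

lemma nu0: "nu 0 = Pinf" and nu1: "nu 1 = Fin 0" and nuM: "nu f \<noteq> Minf"
  and nu_mult: "nu (f * g) = nu f + nu g" and nu_add: "min (nu f) (nu g) \<le> nu (f + g)"
  using val unfolding is_valuation_def by auto

lemma nu_m1: "nu (-1) = Fin 0"
proof -
  have "nu (-1) + nu (-1) = Fin 0" using nu_mult[of "-1" "-1"] nu1 by simp
  moreover have "nu (-1) \<noteq> Minf" by (rule nuM)
  ultimately show ?thesis
  proof (cases "nu (-1)")
    case (Fin x)
    with \<open>nu (-1) + nu (-1) = Fin 0\<close> have "x + x = 0" by simp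
    then have "x = 0"
      by simp
    with Fin show ?thesis by simp
  qed auto
qed

lemma nu_neg: "nu (-f) = nu f"
proof -
  have "nu (-f) = nu (-1 * f)" by simp
  also have "\<dots> = nu f" by (simp only: nu_mult nu_m1 flip: zero_extended_def) simp
  finally show ?thesis .
qed

lemma nu_diff: "min (nu f) (nu g) \<le> nu (f - g)"
  using nu_add[of f "-g"] by (simp add: nu_neg)

lemma nu_strict: assumes "nu f < nu g" shows "nu (f + g) = nu f"
proof (rule ccontr)
  assume ne: "nu (f + g) \<noteq> nu f"
  have "nu f \<le> nu (f + g)" using nu_add[of f g] assms by simp
  with ne have lt: "nu f < nu (f + g)" by simp
  have "min (nu (f+g)) (nu g) \<le> nu ((f + g) - g)" by (rule nu_diff)
  then have "min (nu (f+g)) (nu g) \<le> nu f" by simp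
  with lt assms show False by (simp add: min_def split: if_splits)
qed

lemma nu_sum_gt:
  assumes "finite A" "\<forall>i\<in>A. x < nu (t i)" "x < Pinf"
  shows "x < nu (sum t A)"
  using assms
proof (induction A rule: finite_induct)
  case empty then show ?case by (simp add: nu0)
next
  case (insert a A)
  then have "x < nu (t a)" "x < nu (sum t A)" by auto
  then have "x < min (nu (t a)) (nu (sum t A))" by simp
  also have "\<dots> \<le> nu (t a + sum t A)" by (rule nu_add)
  finally show ?case using insert by simp
qed

lemma nu_pow: "nu (f ^ n) = (\<Sum>i<n. nu f)"
  by (induction n) (simp_all add: nu1 nu_mult zero_extended_def add.commute)

lemma nu_unique_min:
  assumes "finite A" "i0 \<in> A" "\<forall>i\<in>A-{i0}. nu (t i0) < nu (t i)" "nu (t i0) < Pinf"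
  shows "nu (sum t A) = nu (t i0)"
proof -
  have "sum t A = t i0 + sum t (A - {i0})" using assms by (simp add: sum.remove)
  moreover have "nu (t i0) < nu (sum t (A - {i0}))"
    using assms by (intro nu_sum_gt) auto
  ultimately show ?thesis using nu_strict by simp
qed

end


lemma pcompose_pow: "pcompose (p ^ n) q = (pcompose p q) ^ n"
  for p q :: "'a::comm_semiring_1 poly"
  by (induction n) (simp_all add: pcompose_mult pcompose_1)

lemma cut_shift: "p = poly_cutoff i p + monom 1 i * poly_shift i p" for p :: "'a::comm_semiring_1 poly"
  by (rule poly_eqI) (auto simp: coeff_poly_cutoff coeff_poly_shift coeff_monom_mult)

lemma degree_cut: "i > 0 \<Longrightarrow> degree (poly_cutoff i p) < i"
  by (rule le_less_trans[of _ "i - 1"], rule degree_le) (auto simp: coeff_poly_cutoff)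

lemma qexp_div:
  fixes g :: "'k::field poly" and c :: 'k
  defines "Q \<equiv> [:-c, 1:]"
  shows "pcompose g Q div Q ^ i = pcompose (poly_shift i g) Q"
proof -
  have Q0: "Q ^ i \<noteq> 0" by (simp add: Q_def)
  have dQ: "degree (Q ^ i) = i" by (simp add: Q_def degree_power_eq)
  have "pcompose g Q = pcompose (poly_cutoff i g) Q + pcompose (poly_shift i g) Q * Q ^ i"
    by (subst cut_shift[of g i]) (simp add: pcompose_add pcompose_mult monom_altdef pcompose_pow mult.commute Q_def pcompose_pCons)
  moreover have "pcompose (poly_cutoff i g) Q div Q ^ i = 0"
  proof (cases "i = 0")
    case True
    have "poly_cutoff 0 g = 0" by (simp add: poly_eq_iff coeff_poly_cutoff)
    then show ?thesis using True by simp
  next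
    case False
    then have "degree (pcompose (poly_cutoff i g) Q) < degree (Q ^ i)"
      using degree_cut[of i g] dQ unfolding Q_def by (simp add: degree_pcompose)
    then show ?thesis by (rule div_poly_less)
  qed
  ultimately show ?thesis using Q0 by simp
qed

lemma qexp_coeff:
  fixes g :: "'k::field poly" and c :: 'k
  defines "Q \<equiv> [:-c, 1:]"
  shows "qcoeff Q (pcompose g Q) i = [:coeff g i:]"
proof -
  obtain a h where h: "poly_shift i g = pCons a h" by (cases "poly_shift i g") auto
  have a: "a = coeff g i" using arg_cong[OF h, of "\<lambda>p. coeff p 0"] by (simp add: coeff_poly_shift)
  have "qcoeff Q (pcompose g Q) i = ([:a:] + pcompose h Q * Q) mod Q"
    unfolding qcoeff_def Q_def qexp_div h by (simp add: pcompose_pCons mult.commute)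
  also have "\<dots> = [:a:] mod Q" by (rule mod_mult_self1)
  also have "\<dots> = [:a:]" by (rule mod_poly_less) (simp add: Q_def)
  finally show ?thesis using a by simp
qed

lemma lin_comp: "pcompose [:c, 1:] [:-c, 1::'k::comm_ring_1:] = [:0, 1:]"
  by (simp add: pcompose_pCons)

lemma qcoeff_lin:
  fixes f :: "'k::field poly"
  shows "qcoeff [:-c, 1:] f i = [:coeff (pcompose f [:c, 1:]) i:]"
proof -
  have "f = pcompose (pcompose f [:c, 1:]) [:-c, 1:]"
    by (simp add: pcompose_assoc[symmetric] lin_comp)
  then show ?thesis using qexp_coeff[of c "pcompose f [:c, 1:]" i] by metis
qed

definition hsd :: "nat \<Rightarrow> 'a::comm_semiring_1 poly \<Rightarrow> 'a poly" where
  "hsd k p = Poly (map (\<lambda>j. of_nat ((j+k) choose k) * coeff p (j+k)) [0..<Suc (degree p)])"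

lemma coeff_hsd: "coeff (hsd k p) j = of_nat ((j+k) choose k) * coeff p (j+k)"
  by (auto simp del: upt_Suc simp: hsd_def nth_default_def coeff_eq_0)

lemma hsd_add: "hsd k (p + q) = hsd k p + hsd k q"
  by (rule poly_eqI) (simp add: coeff_hsd algebra_simps)

lemma hsd_smult: "hsd k (smult a p) = smult a (hsd k p)"
  by (rule poly_eqI) (simp add: coeff_hsd algebra_simps)

lemma hsd_0: "hsd 0 p = p"
  by (rule poly_eqI) (simp add: coeff_hsd)

lemma hsd_const: "hsd (Suc k) [:a:] = 0"
  by (rule poly_eqI) (simp add: coeff_hsd coeff_pCons split: nat.splits)

lemma hsd_x: "hsd (Suc k) (pCons 0 p) = pCons 0 (hsd (Suc k) p) + hsd k p"
proof (rule poly_eqI)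
  fix j show "coeff (hsd (Suc k) (pCons 0 p)) j = coeff (pCons 0 (hsd (Suc k) p) + hsd k p) j"
  proof (cases j)
    case 0 then show ?thesis by (simp add: coeff_hsd)
  next
    case (Suc j')
    have pas: "(Suc (Suc (j'+k)) choose Suc k) = (Suc (j'+k) choose Suc k) + (Suc (j'+k) choose k)"
      by (metis binomial_Suc_Suc add.commute)
    show ?thesis using Suc by (simp add: coeff_hsd pas algebra_simps del: binomial_Suc_Suc)
  qed
qed

lemma hsd_shift: "hsd k (pcompose g [:c, 1:]) = pcompose (hsd k g) [:c, 1:]"
proof (induction g arbitrary: k)
  case 0 then show ?case by (simp add: hsd_def)
next
  case (pCons a g)
  let ?X = "[:c, 1:]"
  let ?h = "pcompose g ?X"
  have xm: "?X * ?h = pCons 0 ?h + smult c ?h" by (simp add: add.commute)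
  have e: "pcompose (pCons a g) ?X = [:a:] + pCons 0 ?h + smult c ?h"
    by (simp only: pcompose_pCons xm add.assoc)
  show ?case
  proof (cases k)
    case 0 then show ?thesis by (simp add: hsd_0)
  next
    case (Suc k')
    have "hsd k (pcompose (pCons a g) ?X) = pCons 0 (hsd k ?h) + hsd k' ?h + smult c (hsd k ?h)"
      unfolding e Suc by (simp only: hsd_add hsd_smult hsd_const hsd_x add_0_left)
    also have "\<dots> = ?X * pcompose (hsd k g) ?X + pcompose (hsd k' g) ?X"
      using pCons.IH by (simp add: algebra_simps)
    also have "\<dots> = pcompose (hsd k (pCons a g)) ?X"
    proof -
      have "pCons a g = [:a:] + pCons 0 g" by simp
      then have "hsd k (pCons a g) = pCons 0 (hsd k g) + hsd k' g"
        by (metis Suc hsd_add hsd_const hsd_x add_0)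
      then show ?thesis by (simp add: pcompose_add pcompose_pCons)
    qed
    finally show ?thesis .
  qed
qed



locale mctx = valu nu for nu :: "'k::field poly \<Rightarrow> 'g::linordered_ab_group_add extended" +
  fixes Qs :: "'k poly set" and F :: "'k poly"
  assumes Qs_sub: "Qs \<subseteq> Psi nu 1"
    and bigger: "\<forall>Q\<in>Qs. \<exists>Q'\<in>Qs. nu Q < nu Q'"
    and Qs_ne: "Qs \<noteq> {}"
    and FK: "F \<in> KP_inf nu Qs"
begin

abbreviation "ev \<equiv> ev_large nu Qs"

lemma ev_conj: "ev P \<Longrightarrow> ev R \<Longrightarrow> ev (\<lambda>Q. P Q \<and> R Q)"
  unfolding ev_large_def
proof -
  assume "\<exists>Q0\<in>Qs. \<forall>Q\<in>Qs. nu Q0 \<le> nu Q \<longrightarrow> P Q" "\<exists>Q0\<in>Qs. \<forall>Q\<in>Qs. nu Q0 \<le> nu Q \<longrightarrow> R Q"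
  then obtain A B where A: "A \<in> Qs" "\<forall>Q\<in>Qs. nu A \<le> nu Q \<longrightarrow> P Q"
    and B: "B \<in> Qs" "\<forall>Q\<in>Qs. nu B \<le> nu Q \<longrightarrow> R Q" by blast
  show "\<exists>Q0\<in>Qs. \<forall>Q\<in>Qs. nu Q0 \<le> nu Q \<longrightarrow> P Q \<and> R Q"
  proof (cases "nu A \<le> nu B")
    case True then show ?thesis using A B by (intro bexI[of _ B]) (auto intro: order_trans)
  next
    case False then show ?thesis using A B by (intro bexI[of _ A]) (auto intro: order_trans)
  qed
qed

lemma ev_true: "ev (\<lambda>Q. True)"
  using Qs_ne unfolding ev_large_def by auto

lemma ev_mono: "ev P \<Longrightarrow> (\<And>Q. Q \<in> Qs \<Longrightarrow> P Q \<Longrightarrow> R Q) \<Longrightarrow> ev R"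
  unfolding ev_large_def by blast

lemma ev_ball: "finite A \<Longrightarrow> (\<And>x. x \<in> A \<Longrightarrow> ev (P x)) \<Longrightarrow> ev (\<lambda>Q. \<forall>x\<in>A. P x Q)"
proof (induction A rule: finite_induct)
  case empty then show ?case using ev_true by simp
next
  case (insert a A)
  then have "ev (\<lambda>Q. P a Q \<and> (\<forall>x\<in>A. P x Q))" by (intro ev_conj) auto
  then show ?case by simp
qed

lemma ev_strict: assumes "Q0 \<in> Qs" "\<And>Q. Q \<in> Qs \<Longrightarrow> nu Q0 < nu Q \<Longrightarrow> P Q" shows "ev P"
proof -
  obtain Q1 where Q1: "Q1 \<in> Qs" "nu Q0 < nu Q1" using bigger assms(1) by blast
  show ?thesis unfolding ev_large_def
  proof (intro bexI[OF _ Q1(1)] ballI impI)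
    fix Q assume "Q \<in> Qs" "nu Q1 \<le> nu Q"
    then show "P Q" using assms(2) Q1(2) less_le_trans by blast
  qed
qed

lemma ev_get: "ev P \<Longrightarrow> \<exists>Q0\<in>Qs. \<forall>Q\<in>Qs. nu Q0 \<le> nu Q \<longrightarrow> P Q"
  unfolding ev_large_def by blast

definition cc :: "'k poly \<Rightarrow> 'k" where "cc Q = - coeff Q 0"

lemma Qform: assumes "Q \<in> Qs" shows "Q = [:- cc Q, 1:]"
proof -
  have "degree Q = 1" "lead_coeff Q = 1"
    using assms Qs_sub unfolding Psi_def key_poly_def by auto
  show ?thesis
  proof (rule poly_eqI)
    fix n show "coeff Q n = coeff [:- cc Q, 1:] n"
    proof (cases n)
      case 0 then show ?thesis by (simp add: cc_def)
    next
      case (Suc m) note n = Suc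
      show ?thesis
      proof (cases m)
        case 0 then show ?thesis using n \<open>degree Q = 1\<close> \<open>lead_coeff Q = 1\<close> by simp
      next
        case (Suc m') then show ?thesis using n \<open>degree Q = 1\<close> by (simp add: coeff_eq_0)
      qed
    qed
  qed
qed

lemma qc: "Q \<in> Qs \<Longrightarrow> qcoeff Q f l = [:coeff (pcompose f [:cc Q, 1:]) l:]"
  by (subst Qform, assumption, rule qcoeff_lin)

lemma gamfin: assumes "Q \<in> Qs" shows "\<exists>g. nu Q = Fin g"
proof -
  obtain Q' where "Q' \<in> Qs" "nu Q < nu Q'" using bigger assms by blast
  then have "nu Q \<noteq> Pinf" by auto
  then show ?thesis using nuM[of Q] by (cases "nu Q") auto
qed

lemma ccdiff: assumes "Q \<in> Qs" "Q' \<in> Qs" "nu Q < nu Q'"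
  shows "nu [:cc Q' - cc Q:] = nu Q"
proof -
  have "[:cc Q' - cc Q:] = Q + (- Q')"
    by (subst (2) Qform[OF assms(1)], subst Qform[OF assms(2)]) simp
  moreover have "nu Q < nu (- Q')" using assms nu_neg by simp
  ultimately show ?thesis using nu_strict[of Q "-Q'"] by simp
qed

lemma qcoeff_big: assumes "Q \<in> Qs" "degree g < j" shows "qcoeff Q g j = 0"
proof -
  have d1: "degree Q = 1" using assms(1) Qs_sub by (auto simp: Psi_def)
  then have "Q \<noteq> 0" by auto
  then have "degree (Q ^ j) = j" using d1 by (simp add: degree_power_eq)
  then have "g div Q ^ j = 0" using assms by (intro div_poly_less) simp
  then show ?thesis by (simp add: qcoeff_def)
qed

lemma nuQ_le: assumes "Q \<in> Qs" "nuQ nu Q g = nu g"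
  shows "nu g \<le> nu (qcoeff Q g j * Q ^ j)"
proof (cases "j \<le> degree g")
  case True
  have "nuQ nu Q g \<le> nu (qcoeff Q g j * Q ^ j)" unfolding nuQ_def by (rule Min_le) (use True in auto)
  then show ?thesis using assms(2) by simp
next
  case False
  then show ?thesis using qcoeff_big[OF assms(1), of g j] by (simp add: nu0)
qed

lemma nuQ_in: "\<exists>j\<in>{0..degree g}. nuQ nu Q g = nu (qcoeff Q g j * Q ^ j)"
proof -
  have "nuQ nu Q g \<in> (\<lambda>i. nu (qcoeff Q g i * Q ^ i)) ` {0..degree g}"
    unfolding nuQ_def by (rule Min_in) auto
  then show ?thesis by blast
qed

lemma term_eq: "Q \<in> Qs \<Longrightarrow> nu (qcoeff Q g j * Q ^ j) = nu [:coeff (pcompose g [:cc Q, 1:]) j:] + (\<Sum>i<j. nu Q)"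
  by (simp only: qc nu_mult nu_pow)

lemma stable_low: assumes "degree g < degree F" shows "ev (\<lambda>Q. nuQ nu Q g = nu g)"
proof -
  have "\<forall>g. \<not> stable nu Qs g \<longrightarrow> degree F \<le> degree g" using FK by (simp add: KP_inf_def)
  then have "stable nu Qs g" using assms by (meson not_le)
  then show ?thesis by (simp add: stable_def)
qed

end


lemma sum_Fin: "(\<Sum>i<j. Fin x) = Fin (\<Sum>i<(j::nat). x)"
  by (induction j) (simp_all add: zero_extended_def add.commute)

lemma sum_lt: "0 < j \<Longrightarrow> (x::'a::ordered_cancel_comm_monoid_add) < y \<Longrightarrow> (\<Sum>i<(j::nat). x) < (\<Sum>i<j. y)"
  by (rule sum_strict_mono) auto

lemma ext_add_nM: "(a::'a::ab_semigroup_add extended) \<noteq> Minf \<Longrightarrow> b \<noteq> Minf \<Longrightarrow> a + b \<noteq> Minf"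
  by (cases a; cases b) auto

lemma ext_strict: "(A::'a::linordered_ab_group_add extended) + Fin s < Pinf \<Longrightarrow> A \<noteq> Minf \<Longrightarrow> s' < s \<Longrightarrow> A + Fin s' < A + Fin s"
  by (cases A) auto

lemma const_mult: "[:a * b:] = [:a:] * [:b::'a::comm_semiring_1:]"
  by (simp add: mult.commute)

context mctx
begin

lemma nuc1: "nu [:1:] = Fin 0" using nu1 by (simp add: one_pCons[symmetric])

definition aa :: "'k poly \<Rightarrow> nat \<Rightarrow> 'k" where "aa Q l = coeff (pcompose F [:cc Q, 1:]) l"

lemma qcG: "Q \<in> Qs \<Longrightarrow> qcoeff Q (hsd k F) j = [:of_nat ((j+k) choose k) * aa Q (j+k):]"
  by (simp add: qc hsd_shift[symmetric] coeff_hsd aa_def)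

lemma degG: "degree (hsd k F) \<le> degree F - k"
  by (rule degree_le) (auto simp: coeff_hsd coeff_eq_0)

lemma termG: "Q \<in> Qs \<Longrightarrow> nu (qcoeff Q (hsd k F) j * Q ^ j) =
   nu [:of_nat ((j+k) choose k):] + nu [:aa Q (j+k):] + (\<Sum>i<j. nu Q)"
  using term_eq[of Q "hsd k F" j] by (simp only: qc[symmetric] qcG const_mult nu_mult)

lemma Pk: "1 \<le> k \<Longrightarrow> k \<le> degree F \<Longrightarrow> ev (\<lambda>Q. nu [:aa Q k:] = nu (hsd k F))"
proof (induction "degree F - k" arbitrary: k rule: less_induct)
  case less
  let ?d = "degree F" and ?G = "hsd k F"
  have IH: "ev (\<lambda>Q. \<forall>l\<in>{k<..?d}. nu [:aa Q l:] = nu (hsd l F))"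
    by (rule ev_ball) (use less in auto)
  have "degree ?G < ?d" using degG[of k] less by linarith
  then have "ev (\<lambda>Q. nuQ nu Q ?G = nu ?G)" by (rule stable_low)
  from ev_get[OF ev_conj[OF this IH]] obtain T where T: "T \<in> Qs"
    "\<And>Q. Q \<in> Qs \<Longrightarrow> nu T \<le> nu Q \<Longrightarrow> nuQ nu Q ?G = nu ?G \<and> (\<forall>l\<in>{k<..?d}. nu [:aa Q l:] = nu (hsd l F))"
    by blast
  show ?case
  proof (rule ev_strict[OF T(1)])
    fix Q assume Q: "Q \<in> Qs" "nu T < nu Q"
    have stQ: "nuQ nu Q ?G = nu ?G" and eqQ: "\<forall>l\<in>{k<..?d}. nu [:aa Q l:] = nu (hsd l F)"
      using T(2)[OF Q(1)] Q(2) by auto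
    have stT: "nuQ nu T ?G = nu ?G" and eqT: "\<forall>l\<in>{k<..?d}. nu [:aa T l:] = nu (hsd l F)"
      using T(2)[OF T(1)] by auto
    have le0: "nu ?G \<le> nu [:aa Q k:]"
      using nuQ_le[OF Q(1) stQ, of 0] termG[OF Q(1), of k 0] by (simp add: nuc1 zero_extended_def[symmetric])
    show "nu [:aa Q k:] = nu ?G"
    proof (rule ccontr)
      assume ne: "nu [:aa Q k:] \<noteq> nu ?G"
      with le0 have lt: "nu ?G < nu [:aa Q k:]" by simp
      obtain j where j: "j \<in> {0..degree ?G}" "nuQ nu Q ?G = nu (qcoeff Q ?G j * Q ^ j)"
        using nuQ_in by blast
      have "j \<noteq> 0"
      proof
        assume "j = 0"
        then have "nu ?G = nu [:aa Q k:]" using j(2) stQ termG[OF Q(1), of k 0]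
          by (simp add: nuc1 zero_extended_def[symmetric])
        then show False using ne by simp
      qed
      then have jk: "j + k \<in> {k<..?d}" using j(1) degG[of k] less by auto
      define A where "A = nu [:of_nat ((j+k) choose k):] + nu [:aa T (j+k):]"
      obtain gT gQ where gT: "nu T = Fin gT" and gQ: "nu Q = Fin gQ" using gamfin T(1) Q(1) by blast
      have eQ: "nu ?G = A + Fin (\<Sum>i<j. gQ)"
        using j(2) stQ termG[OF Q(1), of k j] eqQ eqT jk unfolding A_def by (simp add: gQ sum_Fin)
      have eT: "nu ?G \<le> A + Fin (\<Sum>i<j. gT)"
        using nuQ_le[OF T(1) stT, of j] termG[OF T(1), of k j] unfolding A_def by (simp add: gT sum_Fin)
      have AM: "A \<noteq> Minf" unfolding A_def by (intro ext_add_nM nuM)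
      have "A + Fin (\<Sum>i<j. gT) < A + Fin (\<Sum>i<j. gQ)"
      proof (rule ext_strict[OF _ AM])
        have "nu ?G < Pinf" using lt le_Pinf by (rule less_le_trans)
        then show "A + Fin (\<Sum>i<j. gQ) < Pinf" using eQ by simp
        show "(\<Sum>i<j. gT) < (\<Sum>i<j. gQ)" using \<open>j \<noteq> 0\<close> Q(2) gT gQ by (intro sum_lt) auto
      qed
      moreover have "A + Fin (\<Sum>i<j. gQ) \<le> A + Fin (\<Sum>i<j. gT)" using eT by (simp only: eQ)
      ultimately show False using leD by blast
    qed
  qed
qed

end


lemma sum_split: "(\<Sum>i<a+b. x) = (\<Sum>i<a. x) + (\<Sum>i<(b::nat). (x::'a::comm_monoid_add))"
  by (induction b) (simp_all add: add.assoc)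

lemma tie_aux:
  fixes x y g1 g2 :: "'g::linordered_ab_group_add" and l m :: nat
  assumes "x + (\<Sum>i<l. g1) = y + (\<Sum>i<l+m. g1)" "x + (\<Sum>i<l. g2) = y + (\<Sum>i<l+m. g2)" "0 < m"
  shows "g1 = g2"
proof -
  have "x + (\<Sum>i<l. g1) = (y + (\<Sum>i<m. g1)) + (\<Sum>i<l. g1)"
    using assms(1) by (simp add: sum_split algebra_simps)
  moreover have "x + (\<Sum>i<l. g2) = (y + (\<Sum>i<m. g2)) + (\<Sum>i<l. g2)"
    using assms(2) by (simp add: sum_split algebra_simps)
  ultimately have "x = y + (\<Sum>i<m. g1)" "x = y + (\<Sum>i<m. g2)" by simp_all
  then have e: "(\<Sum>i<m. g1) = (\<Sum>i<m. g2)" by simp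
  show ?thesis
  proof (rule ccontr)
    assume "g1 \<noteq> g2"
    then consider "g1 < g2" | "g2 < g1" by fastforce
    then show False using sum_lt[OF assms(3), of g1 g2] sum_lt[OF assms(3), of g2 g1] e by cases auto
  qed
qed

lemma tie_unique:
  fixes x y g1 g2 :: "'g::linordered_ab_group_add" and l l' :: nat
  assumes "x + (\<Sum>i<l. g1) = y + (\<Sum>i<l'. g1)" "x + (\<Sum>i<l. g2) = y + (\<Sum>i<l'. g2)" "l \<noteq> l'"
  shows "g1 = g2"
proof (cases "l < l'")
  case True
  have e: "l + (l' - l) = l'" using True by simp
  show ?thesis by (rule tie_aux[where x=x and y=y and l=l and m="l' - l"]) (use assms True in \<open>simp_all only: e zero_less_diff\<close>)
next
  case False
  then have "l' < l" using assms(3) by simp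
  have e: "l' + (l - l') = l" using \<open>l' < l\<close> by simp
  show ?thesis by (rule tie_aux[where x=y and y=x and l=l' and m="l - l'"]) (use assms(1)[symmetric] assms(2)[symmetric] \<open>l' < l\<close> in \<open>simp_all only: e zero_less_diff\<close>)
qed

lemma const_pow: "[:x ^ n:] = [:x::'a::comm_semiring_1:] ^ n"
proof (induction n)
  case 0 then show ?case by (simp add: one_pCons)
next
  case (Suc n) then show ?case by (metis const_mult power_Suc)
qed

lemma const_add: "[:a + b:] = [:a:] + [:b::'a::comm_semiring_1:]"
  by (simp add: add_pCons)

lemma const_sum: "[:sum f A:] = (\<Sum>i\<in>A. [:f i::'a::comm_semiring_1:])"
  by (induction A rule: infinite_finite_induct) (simp_all del: add_pCons add: const_add)

context mctx
begin

abbreviation "ttv Q l \<equiv> nu (qcoeff Q F l) + (\<Sum>i<l. nu Q)"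
abbreviation "abv x \<equiv> above_cut (Gamma nu) (deltaL nu Qs F) x"

lemma tt_eq: "Q \<in> Qs \<Longrightarrow> ttv Q l = nu [:aa Q l:] + (\<Sum>i<l. nu Q)"
  by (simp add: qc aa_def)

lemma tt_eq2: "nu (qcoeff Q F l * Q ^ l) = ttv Q l"
  by (simp add: nu_mult nu_pow)

lemma tt_delta: assumes "Q \<in> Qs" "Q' \<in> Qs" "nu Q < nu Q'"
  shows "ttv Q l = nu [:aa Q l * (cc Q' - cc Q) ^ l:]"
proof -
  have "nu [:aa Q l * (cc Q' - cc Q) ^ l:] = nu ([:aa Q l:] * [:cc Q' - cc Q:] ^ l)"
    by (simp only: const_mult const_pow)
  also have "\<dots> = nu [:aa Q l:] + (\<Sum>i<l. nu Q)"
    by (simp only: nu_mult nu_pow ccdiff[OF assms])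
  finally show ?thesis by (simp add: tt_eq[OF assms(1)])
qed

lemma valK_Gamma: "g \<in> valgrp_K nu \<Longrightarrow> g \<in> Gamma nu"
  unfolding Gamma_def by (rule CollectI, rule exI[of _ 1]) (simp add: nsmul_def)

lemma tt_Gamma: assumes "Q \<in> Qs" "ttv Q l = Fin g" shows "g \<in> Gamma nu"
proof -
  obtain Q' where Q': "Q' \<in> Qs" "nu Q < nu Q'" using bigger assms by blast
  let ?z = "aa Q l * (cc Q' - cc Q) ^ l"
  have "nu [:?z:] = Fin g" using tt_delta[OF assms(1) Q'] assms by simp
  moreover have "?z \<noteq> 0"
  proof
    assume "?z = 0"
    then have "nu [:?z:] = Pinf" by (simp only: pCons_0_0 nu0)
    with \<open>nu [:?z:] = Fin g\<close> show False by simp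
  qed
  ultimately have "g \<in> valgrp_K nu" unfolding valgrp_K_def by blast
  then show ?thesis by (rule valK_Gamma)
qed

lemma in_delta: "Q \<in> Qs \<Longrightarrow> Fin g \<le> nuQ nu Q F \<Longrightarrow> g \<in> Gamma nu \<Longrightarrow> g \<in> deltaL nu Qs F"
  unfolding deltaL_def by blast

lemma delta_down: assumes "g \<in> deltaL nu Qs F" "g' \<le> g" "g' \<in> Gamma nu" shows "g' \<in> deltaL nu Qs F"
proof -
  obtain Q where Q: "Q \<in> Qs" "Fin g \<le> nuQ nu Q F" using assms(1) unfolding deltaL_def by blast
  have "Fin g' \<le> Fin g" using assms(2) by simp
  then have "Fin g' \<le> nuQ nu Q F" using Q(2) by (rule order_trans)
  then show ?thesis using Q(1) assms(3) unfolding deltaL_def by blast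
qed

lemma not_above: "abv (Fin g) \<Longrightarrow> g \<in> deltaL nu Qs F \<Longrightarrow> False"
  unfolding above_cut_def by auto

lemma aa_lead: "Q \<in> Qs \<Longrightarrow> aa Q (degree F) = 1"
proof -
  have "lead_coeff F = 1" using FK by (simp add: KP_inf_def)
  then show "aa Q (degree F) = 1"
    using lead_coeff_comp[of "[:cc Q, 1:]" F] degree_pcompose[of F "[:cc Q, 1:]"]
    by (simp add: aa_def)
qed

lemma sumQ_fin: "Q \<in> Qs \<Longrightarrow> \<exists>s. (\<Sum>i<(l::nat). nu Q) = Fin s"
  using gamfin[of Q] by (auto simp: sum_Fin)

lemma notie_gen:
  fixes l l' :: nat
  assumes "l \<noteq> l'" "b \<noteq> Minf" "b' \<noteq> Minf"
  shows "ev (\<lambda>Q. b \<noteq> Pinf \<longrightarrow> b + (\<Sum>i<l. nu Q) \<noteq> b' + (\<Sum>i<l'. nu Q))"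
proof (cases "\<exists>Qx\<in>Qs. b \<noteq> Pinf \<and> b + (\<Sum>i<l. nu Qx) = b' + (\<Sum>i<l'. nu Qx)")
  case False show ?thesis by (rule ev_mono[OF ev_true]) (use False in blast)
next
  case True
  then obtain Qx where Qx: "Qx \<in> Qs" "b \<noteq> Pinf" "b + (\<Sum>i<l. nu Qx) = b' + (\<Sum>i<l'. nu Qx)" by blast
  obtain Q1 where Q1: "Q1 \<in> Qs" "nu Qx < nu Q1" using bigger Qx(1) by blast
  obtain x where x: "b = Fin x" using Qx(2) assms(2) by (cases b) auto
  obtain gx where gx: "nu Qx = Fin gx" using gamfin Qx(1) by blast
  have b'fin: "b' \<noteq> Pinf" using Qx(3) x gx by (auto simp: sum_Fin)
  obtain y where y: "b' = Fin y" using b'fin assms(3) by (cases b') auto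
  show ?thesis unfolding ev_large_def
  proof (intro bexI[OF _ Q1(1)] ballI impI)
    fix Q assume Q: "Q \<in> Qs" "nu Q1 \<le> nu Q" "b \<noteq> Pinf"
    obtain g where g: "nu Q = Fin g" using gamfin Q(1) by blast
    show "b + (\<Sum>i<l. nu Q) \<noteq> b' + (\<Sum>i<l'. nu Q)"
    proof
      assume "b + (\<Sum>i<l. nu Q) = b' + (\<Sum>i<l'. nu Q)"
      then have "x + (\<Sum>i<l. g) = y + (\<Sum>i<l'. g)" using x y g by (simp add: sum_Fin)
      moreover have "x + (\<Sum>i<l. gx) = y + (\<Sum>i<l'. gx)" using Qx(3) x y gx by (simp add: sum_Fin)
      ultimately have "g = gx" using assms(1) by (rule tie_unique)
      then show False using Q1(2) Q(2) g gx by simp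
    qed
  qed
qed

lemma J0: "0 \<notin> Jset nu Qs 1 F"
proof
  assume "0 \<in> Jset nu Qs 1 F"
  then have "ev (\<lambda>Q. abv (ttv Q 0))" by (simp add: Jset_def)
  then have ev0: "ev (\<lambda>Q. abv (nu [:aa Q 0:]))"
    by (rule ev_mono) (simp add: qc aa_def)
  define d where "d = degree F"
  let ?L = "{1..d}"
  have evP: "ev (\<lambda>Q. \<forall>l\<in>?L. nu [:aa Q l:] = nu (hsd l F))"
    by (rule ev_ball) (auto intro: Pk simp: d_def)
  have evT: "ev (\<lambda>Q. \<forall>pr\<in>?L\<times>?L. fst pr \<noteq> snd pr \<longrightarrow> (nu (hsd (fst pr) F) \<noteq> Pinf \<longrightarrow>
        nu (hsd (fst pr) F) + (\<Sum>i<fst pr. nu Q) \<noteq> nu (hsd (snd pr) F) + (\<Sum>i<snd pr. nu Q)))"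
  proof (rule ev_ball)
    fix pr assume "pr \<in> ?L \<times> ?L"
    show "ev (\<lambda>Q. fst pr \<noteq> snd pr \<longrightarrow> (nu (hsd (fst pr) F) \<noteq> Pinf \<longrightarrow>
        nu (hsd (fst pr) F) + (\<Sum>i<fst pr. nu Q) \<noteq> nu (hsd (snd pr) F) + (\<Sum>i<snd pr. nu Q)))"
    proof (cases "fst pr = snd pr")
      case True show ?thesis by (rule ev_mono[OF ev_true]) (use True in simp)
    next
      case False
      show ?thesis by (rule ev_mono[OF notie_gen[OF False nuM[of "hsd (fst pr) F"] nuM[of "hsd (snd pr) F"]]]) simp
    qed
  qed simp
  from ev_get[OF ev_conj[OF ev0 ev_conj[OF evP evT]]] obtain T where T: "T \<in> Qs"
    "\<And>Q. Q \<in> Qs \<Longrightarrow> nu T \<le> nu Q \<Longrightarrow> abv (nu [:aa Q 0:]) \<and> (\<forall>l\<in>?L. nu [:aa Q l:] = nu (hsd l F)) \<and>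
       (\<forall>pr\<in>?L\<times>?L. fst pr \<noteq> snd pr \<longrightarrow> (nu (hsd (fst pr) F) \<noteq> Pinf \<longrightarrow>
        nu (hsd (fst pr) F) + (\<Sum>i<fst pr. nu Q) \<noteq> nu (hsd (snd pr) F) + (\<Sum>i<snd pr. nu Q)))"
    by blast
  obtain Q' where Q': "Q' \<in> Qs" "nu T < nu Q'" using bigger T(1) by blast
  have abT: "abv (nu [:aa T 0:])" and PT: "\<forall>l\<in>?L. nu [:aa T l:] = nu (hsd l F)"
    and TT: "\<forall>pr\<in>?L\<times>?L. fst pr \<noteq> snd pr \<longrightarrow> (nu (hsd (fst pr) F) \<noteq> Pinf \<longrightarrow>
        nu (hsd (fst pr) F) + (\<Sum>i<fst pr. nu T) \<noteq> nu (hsd (snd pr) F) + (\<Sum>i<snd pr. nu T))"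
    using T(2)[OF T(1)] by auto
  have abQ': "abv (nu [:aa Q' 0:])" using T(2)[OF Q'(1)] Q'(2) by auto
  define N where "N = nuQ nu T F"
  obtain l0 where l0: "l0 \<in> {0..d}" "N = ttv T l0"
    using nuQ_in[where Q=T and g=F] unfolding N_def d_def tt_eq2 by blast
  have Nle: "\<And>l. l \<le> d \<Longrightarrow> N \<le> ttv T l"
    unfolding N_def nuQ_def d_def tt_eq2[symmetric] by (rule Min_le) auto
  obtain sd where sd: "(\<Sum>i<d. nu T) = Fin sd" using sumQ_fin T(1) by blast
  have "ttv T d = Fin sd" using tt_eq[OF T(1), of d] aa_lead[OF T(1)] sd nuc1
    by (simp add: d_def zero_extended_def[symmetric] one_pCons[symmetric])
  then have "N \<noteq> Pinf" using Nle[of d] by auto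
  moreover have "N \<noteq> Minf" using l0(2) tt_eq2[of T l0] nuM by metis
  ultimately obtain n where n: "N = Fin n" by (cases N) auto
  have nG: "n \<in> Gamma nu" using tt_Gamma[OF T(1)] l0(2) n by simp
  have nD: "n \<in> deltaL nu Qs F" using in_delta[OF T(1) _ nG] n N_def by simp
  have tt0: "ttv T 0 = nu [:aa T 0:]" using tt_eq[OF T(1), of 0] by simp
  have N0: "N < ttv T 0"
  proof -
    have "N \<le> ttv T 0" using Nle[of 0] by simp
    moreover have "N \<noteq> ttv T 0"
    proof
      assume "N = ttv T 0"
      then have "abv (Fin n)" using abT tt0 n by simp
      then show False using nD by (rule not_above)
    qed
    ultimately show ?thesis by simp
  qed
  have "l0 \<noteq> 0"
  proof
    assume "l0 = 0"
    then have "N = ttv T 0" using l0(2) by simp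
    then show False using N0 by simp
  qed
  have uniq: "\<forall>l\<in>{..d} - {l0}. N < ttv T l"
  proof
    fix l assume l: "l \<in> {..d} - {l0}"
    show "N < ttv T l"
    proof (cases "l = 0")
      case True then show ?thesis using N0 by simp
    next
      case False
      have "N \<le> ttv T l" using l Nle by simp
      moreover have "N \<noteq> ttv T l"
      proof
        assume eq: "N = ttv T l"
        have inL: "l0 \<in> ?L" "l \<in> ?L" using l l0 \<open>l0 \<noteq> 0\<close> False by auto
        have e0: "N = nu (hsd l0 F) + (\<Sum>i<l0. nu T)" using l0(2) tt_eq[OF T(1)] PT inL by simp
        have e1: "N = nu (hsd l F) + (\<Sum>i<l. nu T)" using eq tt_eq[OF T(1)] PT inL by simp
        have "nu (hsd l0 F) \<noteq> Pinf"
        proof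
          assume "nu (hsd l0 F) = Pinf"
          then show False using e0 n sumQ_fin[OF T(1), of l0] by auto
        qed
        moreover have "(l0, l) \<in> ?L \<times> ?L" using inL by simp
        then have "fst (l0, l) \<noteq> snd (l0, l) \<longrightarrow> (nu (hsd (fst (l0, l)) F) \<noteq> Pinf \<longrightarrow>
          nu (hsd (fst (l0, l)) F) + (\<Sum>i<fst (l0, l). nu T) \<noteq> nu (hsd (snd (l0, l)) F) + (\<Sum>i<snd (l0, l). nu T))"
          using TT by (rule bspec[rotated])
        then have "l0 \<noteq> l \<longrightarrow> (nu (hsd l0 F) \<noteq> Pinf \<longrightarrow>
          nu (hsd l0 F) + (\<Sum>i<l0. nu T) \<noteq> nu (hsd l F) + (\<Sum>i<l. nu T))" by (simp only: fst_conv snd_conv)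
        moreover have "l0 \<noteq> l" using l by auto
        ultimately show False using e0 e1 by simp
      qed
      ultimately show ?thesis by simp
    qed
  qed
  define \<delta> where "\<delta> = cc Q' - cc T"
  have "aa Q' 0 = poly (pcompose F [:cc T, 1:]) \<delta>"
    by (simp add: aa_def poly_pcompose \<delta>_def)
  also have "\<dots> = (\<Sum>l\<le>d. aa T l * \<delta> ^ l)"
    by (simp add: poly_altdef degree_pcompose aa_def d_def)
  finally have "[:aa Q' 0:] = (\<Sum>l\<le>d. [:aa T l * \<delta> ^ l:])" by (simp add: const_sum)
  then have "nu [:aa Q' 0:] = nu [:aa T l0 * \<delta> ^ l0:]"
  proof (simp only:, intro nu_unique_min)
    show "\<forall>i\<in>{..d} - {l0}. nu [:aa T l0 * \<delta> ^ l0:] < nu [:aa T i * \<delta> ^ i:]"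
      using uniq l0(2) tt_delta[OF T(1) Q'] unfolding \<delta>_def by simp
    have "nu [:aa T l0 * \<delta> ^ l0:] = N" using l0(2) tt_delta[OF T(1) Q'] unfolding \<delta>_def by simp
    then show "nu [:aa T l0 * \<delta> ^ l0:] < Pinf" using n by simp
  qed (use l0 in auto)
  also have "\<dots> = N" using l0(2) tt_delta[OF T(1) Q'] unfolding \<delta>_def by simp
  finally have "nu [:aa Q' 0:] = Fin n" using n by simp
  then have "abv (Fin n)" using abQ' by simp
  then show False using nD by (rule not_above)
qed

end


lemma ext_pos_add: "Fin (0::'a::linordered_ab_group_add) < a \<Longrightarrow> Fin 0 \<le> b \<Longrightarrow> Fin 0 < a + b"
  by (cases a; cases b) (auto intro: add_pos_nonneg)

context valu
begin

lemma nu_nat_ge: "Fin 0 \<le> nu [:of_nat n:]"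
proof (induction n)
  case 0 then show ?case by (simp add: nu0)
next
  case (Suc n)
  have "[:of_nat (Suc n):] = [:1:] + ([:of_nat n:] :: 'k poly)" by (subst of_nat_Suc, rule const_add)
  moreover have "nu [:1:] = Fin 0" using nu1 by (simp add: one_pCons[symmetric])
  moreover have "min (nu [:1:]) (nu [:of_nat n:]) \<le> nu ([:1:] + [:of_nat n:])" by (rule nu_add)
  ultimately show ?case using Suc by (simp add: min_def split: if_splits)
qed

lemma cop:
  assumes "coprime a b" "Fin 0 < nu [:of_nat a:]" "Fin 0 < nu [:of_nat b:]"
  shows False
proof -
  have n1: "nu [:1:] = Fin 0" using nu1 by (simp add: one_pCons[symmetric])
  have "a \<noteq> 0"
  proof
    assume "a = 0"
    then have "b = 1" using assms(1) by simp
    then show False using assms(3) n1 by simp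
  qed
  then obtain x y where "a * x = b * y + gcd a b" using bezout_nat by blast
  then have xy: "a * x = b * y + 1" using assms(1) by simp
  have "(of_nat (a * x) :: 'k) = of_nat (b * y) + 1" using xy by simp
  then have e: "[:of_nat (a * x):] - [:of_nat (b * y):] = [:1::'k:]" by simp
  have pa: "Fin 0 < nu [:of_nat (a * x):]"
    using ext_pos_add[OF assms(2) nu_nat_ge[of x]] by (simp only: of_nat_mult const_mult nu_mult)
  have pb: "Fin 0 < nu [:of_nat (b * y):]"
    using ext_pos_add[OF assms(3) nu_nat_ge[of y]] by (simp only: of_nat_mult const_mult nu_mult)
  have "min (nu [:of_nat (a * x):]) (nu [:of_nat (b * y):]) \<le> nu [:1::'k:]"
    using nu_diff[of "[:of_nat (a * x):]" "[:of_nat (b * y):]"] e by simp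
  then show False using pa pb n1 by (simp add: min_def split: if_splits)
qed

lemma charp:
  assumes "Fin 0 < nu [:of_nat (char_exp nu):]"
  shows "prime (char_exp nu)"
proof (cases "\<exists>q::nat. prime q \<and> Fin 0 < nu [:of_nat q:]")
  case True
  then obtain q where q: "prime q" "Fin 0 < nu [:of_nat q:]" by blast
  have uq: "r = q" if r: "prime r" "Fin 0 < nu [:of_nat r:]" for r
  proof (rule ccontr)
    assume "r \<noteq> q"
    with r(1) q(1) have "coprime r q" by (rule primes_coprime)
    from cop[OF this r(2) q(2)] show False .
  qed
  have "(THE q::nat. prime q \<and> Fin 0 < nu [:of_nat q:]) = q"
  proof (rule the_equality)
    show "prime q \<and> Fin 0 < nu [:of_nat q:]" using q by (rule conjI)
    fix r assume "prime r \<and> Fin 0 < nu [:of_nat r:]"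
    then show "r = q" using uq by blast
  qed
  moreover have "char_exp nu = (THE q::nat. prime q \<and> Fin 0 < nu [:of_nat q:])"
    unfolding char_exp_def using True by (rule if_P)
  ultimately have "char_exp nu = q" by simp
  then show ?thesis using q(1) by simp
next
  case False
  then have "char_exp nu = 1" unfolding char_exp_def by (rule if_not_P)
  moreover have "nu [:of_nat 1:] = Fin 0" using nu1 by (simp add: one_pCons[symmetric])
  ultimately show ?thesis using assms by simp
qed

lemma nondiv:
  assumes "Fin 0 < nu [:of_nat (char_exp nu):]" "\<not> char_exp nu dvd n"
  shows "nu [:of_nat n:] \<le> Fin 0"
proof -
  have "coprime (char_exp nu) n" using charp[OF assms(1)] assms(2) by (rule prime_imp_coprime)
  have "\<not> Fin 0 < nu [:of_nat n:]"
  proof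
    assume "Fin 0 < nu [:of_nat n:]"
    with \<open>coprime (char_exp nu) n\<close> assms(1) show False by (rule cop)
  qed
  then show ?thesis by simp
qed

end

context mctx
begin

lemma Jk:
  assumes "k \<in> Jset nu Qs 1 F" "l \<in> Bset nu Qs 1 F" "1 \<le> k" "k < l"
    and C: "nu [:of_nat (l choose k):] \<le> Fin 0"
  shows False
proof -
  have kd: "k \<le> degree F" and evk: "ev (\<lambda>Q. abv (ttv Q k))" using assms(1) by (auto simp: Jset_def)
  have ld: "l \<le> degree F" and nevl: "\<not> ev (\<lambda>Q. abv (ttv Q l))" using assms(2) by (auto simp: Bset_def Jset_def)
  have "degree (hsd k F) < degree F" using degG[of k] assms(3) kd by linarith
  then have evs: "ev (\<lambda>Q. nuQ nu Q (hsd k F) = nu (hsd k F))" by (rule stable_low)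
  have evp: "ev (\<lambda>Q. nu [:aa Q k:] = nu (hsd k F))" using Pk assms(3) kd by blast
  from ev_get[OF ev_conj[OF evk ev_conj[OF evs evp]]] obtain T where T: "T \<in> Qs"
    "\<And>Q. Q \<in> Qs \<Longrightarrow> nu T \<le> nu Q \<Longrightarrow> abv (ttv Q k) \<and> nuQ nu Q (hsd k F) = nu (hsd k F) \<and>
        nu [:aa Q k:] = nu (hsd k F)" by blast
  have "\<not> (\<forall>Q\<in>Qs. nu T \<le> nu Q \<longrightarrow> abv (ttv Q l))" using nevl T(1) unfolding ev_large_def by blast
  then obtain Q where Q: "Q \<in> Qs" "nu T \<le> nu Q" "\<not> abv (ttv Q l)" by blast
  have abk: "abv (ttv Q k)" and st: "nuQ nu Q (hsd k F) = nu (hsd k F)"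
    and eqk: "nu [:aa Q k:] = nu (hsd k F)" using T(2)[OF Q(1,2)] by auto
  have "ttv Q l \<noteq> Pinf" using Q(3) unfolding above_cut_def by auto
  moreover have "ttv Q l \<noteq> Minf" using tt_eq2[of Q l] nuM by metis
  ultimately obtain g where g: "ttv Q l = Fin g" by (cases "ttv Q l") auto
  have gG: "g \<in> Gamma nu" using tt_Gamma[OF Q(1) g] .
  have gD: "g \<in> deltaL nu Qs F" using Q(3) g gG unfolding above_cut_def by auto
  have lk: "(l - k) + k = l" using assms(4) by simp
  have "nu [:aa Q k:] \<le> nu (qcoeff Q (hsd k F) (l - k) * Q ^ (l - k))"
    using nuQ_le[OF Q(1) st] eqk by simp
  also have "\<dots> = nu [:of_nat (l choose k):] + (nu [:aa Q l:] + (\<Sum>i<l-k. nu Q))"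
    using termG[OF Q(1), of k "l - k"] lk by (simp add: add.assoc)
  also have "\<dots> \<le> 0 + (nu [:aa Q l:] + (\<Sum>i<l-k. nu Q))"
    using C by (intro add_right_mono) (simp add: zero_extended_def)
  finally have ineq: "nu [:aa Q k:] \<le> nu [:aa Q l:] + (\<Sum>i<l-k. nu Q)" by simp
  have "ttv Q k \<le> ttv Q l"
  proof -
    have "ttv Q k = nu [:aa Q k:] + (\<Sum>i<k. nu Q)" by (rule tt_eq[OF Q(1)])
    also have "\<dots> \<le> nu [:aa Q l:] + (\<Sum>i<l-k. nu Q) + (\<Sum>i<k. nu Q)"
      using ineq by (rule add_right_mono)
    also have "\<dots> = nu [:aa Q l:] + (\<Sum>i<l. nu Q)"
      using sum_split[where a="l - k" and b=k and x="nu Q"] lk by (simp add: add.assoc)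
    also have "\<dots> = ttv Q l" by (rule tt_eq[OF Q(1), symmetric])
    finally show ?thesis .
  qed
  then have le: "ttv Q k \<le> Fin g" using g by simp
  then have "ttv Q k \<noteq> Pinf" by auto
  then obtain g' where g': "ttv Q k = Fin g'" "g' \<in> Gamma nu" "g' \<notin> deltaL nu Qs F"
    using abk unfolding above_cut_def by auto
  have "g' \<le> g" using le g' by simp
  then have "g' \<in> deltaL nu Qs F" using delta_down[OF gD _ g'(2)] by simp
  then show False using g'(3) by simp
qed

end

theorem mainTheorem19:
  fixes nu :: "'k::field poly \<Rightarrow> 'g::linordered_ab_group_add extended"
    and Qs :: "'k poly set" and m :: nat and F :: "'k poly"
  assumes div: "divisible_grp TYPE('g)"
    and val: "is_valuation nu"
    and ws: "well_specified nu"
    and m1: "m \<ge> 1"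
    and Psi_ne: "Psi nu m \<noteq> {}"
    and Psi_nomax: "\<forall>P\<in>Psi nu m. \<exists>P'\<in>Psi nu m. nu P < nu P'"
    and Qs_sub: "Qs \<subseteq> Psi nu m"
    and Qs_inj: "inj_on nu Qs"
    and Qs_wo: "\<forall>S\<subseteq>Qs. S \<noteq> {} \<longrightarrow> (\<exists>Q\<in>S. \<forall>R\<in>S. nu Q \<le> nu R)"
    and Qs_cof: "\<forall>P\<in>Psi nu m. \<exists>Q\<in>Qs. nu P \<le> nu Q"
    and unst: "\<exists>f. \<not> stable nu Qs f"
    and F: "F \<in> KP_inf nu Qs"
    and vunb: "\<not> vert_bounded (gammaL nu Qs)"
    and m_eq: "m = 1"
    and vp: "\<forall>h\<in>invariance_grp (Gamma nu) (gammaL nu Qs). Fin h < nu [:of_nat (char_exp nu):]"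
  shows "\<forall>k\<in>Jset nu Qs m F. \<forall>l\<in>Bset nu Qs m F. k < l \<longrightarrow> char_exp nu dvd (l choose k)"
proof -
  have bigger: "\<forall>Q\<in>Qs. \<exists>Q'\<in>Qs. nu Q < nu Q'"
  proof
    fix Q assume "Q \<in> Qs"
    then have "Q \<in> Psi nu m" using Qs_sub by blast
    then obtain P where P: "P \<in> Psi nu m" "nu Q < nu P" using Psi_nomax by blast
    then obtain Q' where "Q' \<in> Qs" "nu P \<le> nu Q'" using Qs_cof by blast
    then show "\<exists>Q'\<in>Qs. nu Q < nu Q'" using P(2) less_le_trans by blast
  qed
  have ne: "Qs \<noteq> {}" using Psi_ne Qs_cof by blast
  have M: "mctx nu Qs F"
    unfolding mctx_def mctx_axioms_def valu_def using val Qs_sub m_eq bigger ne F by auto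
  have V: "valu nu" using val by (simp add: valu_def)
  have n1: "nu [:1:] = Fin 0" using val by (simp add: is_valuation_def one_pCons[symmetric])
  have "0 \<in> valgrp_K nu" unfolding valgrp_K_def using n1 by (intro CollectI exI[of _ 1]) simp
  then have "0 \<in> Gamma nu" unfolding Gamma_def by (intro CollectI exI[of _ 1]) (simp add: nsmul_def)
  then have "0 \<in> invariance_grp (Gamma nu) (gammaL nu Qs)" unfolding invariance_grp_def by simp
  then have vp0: "Fin 0 < nu [:of_nat (char_exp nu):]" using vp by blast
  show ?thesis
  proof (intro ballI impI)
    fix k l assume k: "k \<in> Jset nu Qs m F" and l: "l \<in> Bset nu Qs m F" and kl: "k < l"
    show "char_exp nu dvd (l choose k)"
    proof (rule ccontr)
      assume nd: "\<not> char_exp nu dvd (l choose k)"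
      have "k \<noteq> 0"
      proof
        assume "k = 0"
        then show False using mctx.J0[OF M] k m_eq by simp
      qed
      then have k1: "1 \<le> k" by simp
      have C: "nu [:of_nat (l choose k):] \<le> Fin 0" by (rule valu.nondiv[OF V vp0 nd])
      have k': "k \<in> Jset nu Qs 1 F" and l': "l \<in> Bset nu Qs 1 F" using k l m_eq by simp_all
      show False by (rule mctx.Jk[OF M k' l' k1 kl C])
    qed
  qed
qed


end
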